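(* Let $q=p^h$ with $p>3$ prime, let $X,T$ be positive integers, and let $\mathcal{E}$ be an elliptic curve over $\mathbb{F}_q$ with affine equation $y^2=f(x)$, $\deg f=3$; let $\gamma=\#\{z\in\mathbb{F}_q: f(z)=0\}$. Define $$\mathcal{R}^{\mathcal{X}}_{\max}=\frac{L^{\mathcal{X}}}{L^{\mathcal{X}}+X+T},\quad L^{\mathcal{X}}=\left\lfloor\frac{q-(X+T)}{2}\right\rfloor,$$ $$\mathcal{R}^{\mathcal{E}}_{\max}=\frac{L^{\mathcal{E}}}{L^{\mathcal{E}}+X+T+8},\quad L^{\mathcal{E}}=2\left\lfloor\frac{\#\mathcal{E}(\mathbb{F}_q)-(X+T+\gamma+9)}{4}\right\rfloor-1.$$ If $\#\mathcal{E}(\mathbb{F}_q)\ge q\left(1+\frac{8}{X+T}\right)+\gamma+7$, then $\mathcal{R}^{\mathcal{E}}_{\max}>\mathcal{R}^{\mathcal{X}}_{\max}$.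
   Context: $\mathcal{R}^{\mathcal{X}}_{\max}$ is the largest rate of the known XSTPIR construction from rational curves over $\mathbb{F}_q$ (which gives, whenever $2L+X+T\le q$, an $X$-secure $T$-private PIR scheme with $N=L+X+T$ servers and rate $L/N$), and $\mathcal{R}^{\mathcal{E}}_{\max}$ is the largest rate of the known construction from the elliptic curve $\mathcal{E}$ (rate $L/N$, $N=L+X+T+8$, $L$ odd, requiring $\#\mathcal{E}(\mathbb{F}_q)\ge 2L+X+T+11+\gamma$); the explicit formulas above are these maxima. *)

theory Defs
  imports "HOL-Computational_Algebra.Computational_Algebra"
begin

text \<open>Elliptic curve y^2 = f(x) over a finite field 'a, with f of degree 3 and
 without repeated roots (nonsingularity; char > 3).\<close>
definition elliptic_cubic :: "'a::field poly \<Rightarrow> bool" where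
  "elliptic_cubic f \<longleftrightarrow> degree f = 3 \<and> coprime f (pderiv f)"

text \<open>Number of F_q-rational points: affine solutions plus the point at infinity.\<close>
definition num_points :: "'a::{field,finite} poly \<Rightarrow> nat" where
  "num_points f = card {(x, y). y ^ 2 = poly f x} + 1"

definition num_roots :: "'a::{field,finite} poly \<Rightarrow> nat" where
  "num_roots f = card {z. poly f z = 0}"

definition L_X :: "nat \<Rightarrow> nat \<Rightarrow> nat \<Rightarrow> int" where
  "L_X q X T = \<lfloor>(real q - real (X + T)) / 2\<rfloor>"

definition R_X_max :: "nat \<Rightarrow> nat \<Rightarrow> nat \<Rightarrow> real" where
  "R_X_max q X T = real_of_int (L_X q X T) / (real_of_int (L_X q X T) + real (X + T))"

definition L_E :: "nat \<Rightarrow> nat \<Rightarrow> nat \<Rightarrow> nat \<Rightarrow> int" where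
  "L_E N \<gamma> X T = 2 * \<lfloor>(real N - real (X + T + \<gamma> + 9)) / 4\<rfloor> - 1"

definition R_E_max :: "nat \<Rightarrow> nat \<Rightarrow> nat \<Rightarrow> nat \<Rightarrow> real" where
  "R_E_max N \<gamma> X T = real_of_int (L_E N \<gamma> X T) / (real_of_int (L_E N \<gamma> X T) + real (X + T + 8))"

end

theory Submission
  imports Defs
begin

lemma fl2: fixes x :: real shows "2 * real_of_int \<lfloor>x/2\<rfloor> \<le> x" "x - 2 < 2 * real_of_int \<lfloor>x/2\<rfloor>"
proof -
  have "real_of_int \<lfloor>x/2\<rfloor> \<le> x/2" "x/2 - 1 < real_of_int \<lfloor>x/2\<rfloor>"
    by (rule of_int_floor_le, rule real_of_int_floor_gt_diff_one)
  thus "2 * real_of_int \<lfloor>x/2\<rfloor> \<le> x" "x - 2 < 2 * real_of_int \<lfloor>x/2\<rfloor>" by linarith+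
qed

lemma fl4: fixes x :: real shows "x - 4 < 4 * real_of_int \<lfloor>x/4\<rfloor>"
proof -
  have "x/4 - 1 < real_of_int \<lfloor>x/4\<rfloor>" by (rule real_of_int_floor_gt_diff_one)
  thus ?thesis by linarith
qed

lemma key:
  fixes a b S q N g :: real
  assumes S: "S \<ge> 2" and q: "q \<ge> 1" and g: "g \<ge> 0"
    and ha: "2 * a \<le> q - S" and ha2: "2 * a > q - S - 2" and hb: "4 * b > N - S - g - 13"
    and hN: "N \<ge> q * (1 + 8 / S) + g + 7"
  shows "(2*b-1) / ((2*b-1) + (S + 8)) > a / (a + S)"
proof -
  have hN': "S * N \<ge> q * (S + 8) + S * (g + 7)"
    using hN S by (simp add: field_simps)
  have p1: "a + S > 0" using ha2 q S by linarith
  have "q * (8 / S) \<ge> 0" using S q by simp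
  hence "N \<ge> q + g + 7" using hN by (simp add: algebra_simps)
  hence p2: "(2*b-1) + (S + 8) > 0" using hb S g q by linarith
  have "S * (4*b) > S * (N - S - g - 13)" using hb S by simp
  hence "S * (4*b) > q * (S + 8) + S * (g + 7) - S * (S + g + 13)" using hN' by (simp add: algebra_simps)
  moreover have "(S + 8) * (2*a) \<le> (S+8) * (q - S)" using ha S by simp
  ultimately have "(S + 8) * a < S * (2*b - 1)" by (simp add: algebra_simps)
  hence "a * ((2*b-1) + (S + 8)) < (2*b-1) * (a + S)" by (simp add: algebra_simps)
  thus ?thesis using p1 p2 by (simp add: divide_simps)
qed

theorem proposition4p2:
  fixes f :: "'a::{field,finite} poly" and p h q X T :: nat
  assumes "prime p" and "p > 3" and "q = card (UNIV :: 'a set)" and "q = p ^ h"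
    and "X > 0" and "T > 0"
    and "elliptic_cubic f"
    and "real (num_points f) \<ge> real q * (1 + 8 / real (X + T)) + real (num_roots f) + 7"
  shows "R_E_max (num_points f) (num_roots f) X T > R_X_max q X T"
proof -
  have "0 < card (UNIV :: 'a set)" by (rule finite_UNIV_card_ge_0) simp
  hence q1: "real q \<ge> 1" using assms(3) by simp
  define a where "a = \<lfloor>(real q - real (X + T)) / 2\<rfloor>"
  define b where "b = \<lfloor>(real (num_points f) - real (X + T + num_roots f + 9)) / 4\<rfloor>"
  have ha: "2 * real_of_int a \<le> real q - real (X + T)"
    unfolding a_def by (rule fl2)
  have ha2: "2 * real_of_int a > real q - real (X + T) - 2"
    unfolding a_def using fl2(2) by simp
  have hb: "4 * real_of_int b > real (num_points f) - real (X + T) - real (num_roots f) - 13"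
    unfolding b_def using fl4[of "real (num_points f) - real (X + T + num_roots f + 9)"] by simp
  have "(2*real_of_int b-1) / ((2*real_of_int b-1) + (real (X+T) + 8)) > real_of_int a / (real_of_int a + real (X+T))"
    by (rule key[OF _ q1 _ ha ha2 hb assms(8)]) (use assms(5,6) in auto)
  thus ?thesis unfolding R_E_max_def R_X_max_def L_E_def L_X_def a_def[symmetric] b_def[symmetric]
    by simp
qed

end
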